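(* Let $X$ be a compact countable metric space and $f\colon X\to X$ a continuous map. If $f$ has a scrambled pair, then there exist $\delta>0$ and an infinite $\delta$-scrambled set for $f$.
   Context: For $\delta>0$, a pair $(u,v)$ of points is $\delta$-scrambled if $\liminf_{n\to\infty}d(f^n(u),f^n(v))=0$ and $\limsup_{n\to\infty}d(f^n(u),f^n(v))\ge\delta$; it is a scrambled pair if it is $\delta$-scrambled for some $\delta>0$. A set is $\delta$-scrambled if every pair of its distinct points is $\delta$-scrambled. *)

theory Defs
  imports "HOL-Analysis.Analysis"
begin

definition delta_scrambled_pair ::
  "('a::metric_space \<Rightarrow> 'a) \<Rightarrow> real \<Rightarrow> 'a \<Rightarrow> 'a \<Rightarrow> bool" where
  "delta_scrambled_pair f \<delta> u v \<longleftrightarrow>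
     liminf (\<lambda>n. ereal (dist ((f ^^ n) u) ((f ^^ n) v))) = 0 \<and>
     limsup (\<lambda>n. ereal (dist ((f ^^ n) u) ((f ^^ n) v))) \<ge> ereal \<delta>"

definition scrambled_pair :: "('a::metric_space \<Rightarrow> 'a) \<Rightarrow> 'a \<Rightarrow> 'a \<Rightarrow> bool" where
  "scrambled_pair f u v \<longleftrightarrow> (\<exists>\<delta>>0. delta_scrambled_pair f \<delta> u v)"

definition delta_scrambled_set ::
  "('a::metric_space \<Rightarrow> 'a) \<Rightarrow> real \<Rightarrow> 'a set \<Rightarrow> bool" where
  "delta_scrambled_set f \<delta> S \<longleftrightarrow>
     (\<forall>u\<in>S. \<forall>v\<in>S. u \<noteq> v \<longrightarrow> delta_scrambled_pair f \<delta> u v)"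

end

theory Submission
  imports Defs
begin


lemma countable_compact_isolated:
  fixes M :: "'a::metric_space set"
  assumes "compact M" "countable M" "M \<noteq> {}"
  shows "\<exists>p\<in>M. \<exists>e>0. \<forall>y\<in>M. dist y p < e \<longrightarrow> y = p"
proof (rule ccontr)
  assume H: "\<not> ?thesis"
  let ?T = "top_of_set M"
  let ?G = "(\<lambda>x. {x}) ` M"
  have "?T interior_of \<Union>?G = {}"
  proof (rule Baire_category_alt)
    show "completely_metrizable_space ?T \<or> locally_compact_space ?T \<and> regular_space ?T"
    proof (rule disjI2, rule conjI)
      show "locally_compact_space ?T"
        by (rule compact_imp_locally_compact_space, rule compact_space_subtopology)
          (simp add: assms(1))
      show "regular_space ?T"
        by (rule metrizable_imp_regular_space, rule metrizable_space_subtopology,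
            rule metrizable_space_euclidean)
    qed
    show "countable ?G" using assms(2) by simp
    fix T assume "T \<in> ?G"
    then obtain x where x: "x \<in> M" "T = {x}" by auto
    have "closedin ?T {x}" using x by (simp add: closedin_closed_Int) 
    moreover have "?T interior_of {x} = {}"
    proof (rule ccontr)
      assume "?T interior_of {x} \<noteq> {}"
      then have "x \<in> ?T interior_of {x}" using interior_of_subset by fastforce
      then have "openin ?T {x}"
        by (metis empty_iff interior_of_subset openin_interior_of subset_singletonD)
      then obtain e where e: "e > 0" "\<forall>x'\<in>M. dist x' x < e \<longrightarrow> x' \<in> {x}"
        unfolding openin_euclidean_subtopology_iff by blast
      have "\<exists>p\<in>M. \<exists>e>0. \<forall>y\<in>M. dist y p < e \<longrightarrow> y = p"
        using x(1) e by blast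
      then show False using H by blast
    qed
    ultimately show "closedin ?T T \<and> ?T interior_of T = {}" using x by simp
  qed
  moreover have "\<Union>?G = M" by auto
  ultimately show False using assms(3) by (simp add: interior_of_openin)
qed

lemma finite_chain_min:
  fixes F :: "'b set set"
  shows "finite F \<Longrightarrow> F \<noteq> {} \<Longrightarrow> \<forall>x\<in>F. \<forall>y\<in>F. x \<subseteq> y \<or> y \<subseteq> x \<Longrightarrow> \<exists>m\<in>F. \<forall>x\<in>F. m \<subseteq> x"
proof (induction F rule: finite_induct)
  case empty then show ?case by simp
next
  case (insert a F)
  show ?case
  proof (cases "F = {}")
    case True then show ?thesis by simp
  next
    case False
    then obtain m where m: "m \<in> F" "\<forall>x\<in>F. m \<subseteq> x" using insert by blast
    have "a \<subseteq> m \<or> m \<subseteq> a" using insert.prems m(1) by blast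
    then show ?thesis
    proof
      assume am: "a \<subseteq> m"
      have "\<forall>x\<in>insert a F. a \<subseteq> x" using am m(2) by auto
      then show ?thesis by blast
    next
      assume ma: "m \<subseteq> a"
      have "\<forall>x\<in>insert a F. m \<subseteq> x" using ma m(2) by auto
      then show ?thesis using m(1) by blast
    qed
  qed
qed

lemma funpow_in: "h ` X \<subseteq> X \<Longrightarrow> x \<in> X \<Longrightarrow> (h ^^ n) x \<in> X"
  by (induction n) auto

lemma periodic_exists:
  fixes K :: "'a::metric_space set"
  assumes K: "compact K" "countable K" "K \<noteq> {}" and cf: "continuous_on K f" and fK: "f ` K \<subseteq> K"
  shows "\<exists>c\<in>K. \<exists>m>0. (f ^^ m) c = c"
proof -
  define P where "P M \<longleftrightarrow> M \<subseteq> K \<and> M \<noteq> {} \<and> closed M \<and> f ` M \<subseteq> M" for M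
  define A where "A = uminus ` {M. P M}"
  have "\<exists>U\<in>A. \<forall>X\<in>C. X \<subseteq> U" if C: "C \<in> chains A" for C
  proof (cases "C = {}")
    case True
    have "P K" using K fK by (simp add: P_def compact_imp_closed)
    then show ?thesis using True A_def by blast
  next
    case False
    define MM where "MM = uminus ` C"
    have CA: "C \<subseteq> A" and ch: "\<forall>x\<in>C. \<forall>y\<in>C. x \<subseteq> y \<or> y \<subseteq> x"
      using C by (auto simp: chains_def chain_subset_def)
    have PMM0: "P M" if "M \<in> MM" for M
      using that CA unfolding MM_def A_def by auto
    have PMM: "P M" "M \<subseteq> K" "M \<noteq> {}" "closed M" "f ` M \<subseteq> M" if "M \<in> MM" for M
      using PMM0[OF that] unfolding P_def by auto
    have chMM: "\<forall>x\<in>MM. \<forall>y\<in>MM. x \<subseteq> y \<or> y \<subseteq> x"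
      using ch unfolding MM_def by auto
    have MMne: "MM \<noteq> {}" using False MM_def by auto
    have "K \<inter> \<Inter>MM \<noteq> {}"
    proof (rule compact_imp_fip[OF K(1)])
      show "closed T" if "T \<in> MM" for T using PMM[OF that] by auto
      fix F' assume F': "finite F'" "F' \<subseteq> MM"
      show "K \<inter> \<Inter>F' \<noteq> {}"
      proof (cases "F' = {}")
        case True then show ?thesis using K by simp
      next
        case False
        have "\<forall>x\<in>F'. \<forall>y\<in>F'. x \<subseteq> y \<or> y \<subseteq> x" using chMM F' by blast
        then obtain m where m: "m \<in> F'" "\<forall>x\<in>F'. m \<subseteq> x"
          using finite_chain_min[OF F'(1) False] by blast
        have "m \<in> MM" using F' m by blast
        then have "m \<subseteq> K" "m \<noteq> {}" using PMM by auto
        then show ?thesis using m by blast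
      qed
    qed
    then have "\<Inter>MM \<noteq> {}" by blast
    moreover have "\<Inter>MM \<subseteq> K" using MMne PMM(2) by blast
    moreover have "closed (\<Inter>MM)" using PMM(4) by (auto intro!: closed_Inter)
    moreover have "f ` \<Inter>MM \<subseteq> \<Inter>MM" using PMM(5) by blast
    ultimately have "P (\<Inter>MM)" by (simp add: P_def)
    then have "- \<Inter>MM \<in> A" using A_def by blast
    moreover have "\<forall>X\<in>C. X \<subseteq> - \<Inter>MM" using MM_def by auto
    ultimately show ?thesis by blast
  qed
  then obtain M0 where M0: "M0 \<in> A" "\<forall>X\<in>A. M0 \<subseteq> X \<longrightarrow> X = M0"
    using Zorn_Lemma2[of A] by blast
  define M where "M = - M0"
  have PM: "P M" using M0(1) A_def M_def by auto
  have minM: "N = M" if "P N" "N \<subseteq> M" for N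
  proof -
    have "- N \<in> A" using that A_def by blast
    moreover have "M0 \<subseteq> - N" using that M_def by auto
    ultimately have "- N = M0" using M0(2) by blast
    then show ?thesis using M_def by auto
  qed
  have MKM: "M \<subseteq> K" using PM unfolding P_def by blast
  have "closed M" using PM unfolding P_def by blast
  then have "compact (K \<inter> M)" using compact_Int_closed[OF K(1)] by blast
  moreover have "K \<inter> M = M" using MKM by blast
  ultimately have Mc: "compact M" by simp
  have "countable M" using PM K(2) P_def countable_subset by blast
  then obtain p e where p: "p \<in> M" "e > 0" "\<forall>y\<in>M. dist y p < e \<longrightarrow> y = p"
    using countable_compact_isolated[OF Mc] PM P_def by blast
  define Orb where "Orb = closure (range (\<lambda>k. (f ^^ k) (f p)))"
  have fM: "f ` M \<subseteq> M" using PM P_def by blast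
  have fp: "f p \<in> M" using fM p(1) by blast
  have rM: "range (\<lambda>k. (f ^^ k) (f p)) \<subseteq> M" using funpow_in[OF fM fp] by blast
  have "closed M" using PM unfolding P_def by blast
  then have OrbM: "Orb \<subseteq> M" unfolding Orb_def using rM closure_minimal by blast
  have "P Orb"
  proof -
    have "Orb \<noteq> {}" unfolding Orb_def by auto
    moreover have "closed Orb" unfolding Orb_def by simp
    moreover have "f ` Orb \<subseteq> Orb" unfolding Orb_def
    proof (rule image_closure_subset)
      show "continuous_on (closure (range (\<lambda>k. (f ^^ k) (f p)))) f"
        using continuous_on_subset[OF cf] OrbM MKM unfolding Orb_def by blast
      show "closed (closure (range (\<lambda>k. (f ^^ k) (f p))))" by simp
      show "f ` range (\<lambda>k. (f ^^ k) (f p)) \<subseteq> closure (range (\<lambda>k. (f ^^ k) (f p)))"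
      proof (rule image_subsetI)
        fix x assume "x \<in> range (\<lambda>k. (f ^^ k) (f p))"
        then obtain k where xk: "x = (f ^^ k) (f p)" by blast
        have "f x = (f ^^ Suc k) (f p)" unfolding xk by (simp only: funpow.simps(2) o_apply)
        then have "f x \<in> range (\<lambda>k. (f ^^ k) (f p))" by (rule range_eqI)
        then show "f x \<in> closure (range (\<lambda>k. (f ^^ k) (f p)))" by (rule subsetD[OF closure_subset])
      qed
    qed
    ultimately show ?thesis using OrbM PM unfolding P_def by blast
  qed
  then have "Orb = M" using minM OrbM by blast
  then have "p \<in> closure (range (\<lambda>k. (f ^^ k) (f p)))" using p(1) Orb_def by simp
  then obtain y where y: "y \<in> range (\<lambda>k. (f ^^ k) (f p))" "dist y p < e"
    using p(2) unfolding closure_approachable by blast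
  then obtain k where k: "y = (f ^^ k) (f p)" by blast
  have "y = p" using y rM p(3) by blast
  have "(f ^^ Suc k) p = (f ^^ k) (f p)" by (simp only: funpow_Suc_right o_apply)
  then have "(f ^^ Suc k) p = p" using k \<open>y = p\<close> by simp
  moreover have "p \<in> K" using p(1) MKM by blast
  moreover have "Suc k > 0" by simp
  ultimately show ?thesis by blast
qed



lemma funpow_add_apply: "(g ^^ (k + i)) w = (g ^^ i) ((g ^^ k) w)"
  by (induction i) simp_all


lemma funpow_fix: "g c = c \<Longrightarrow> (g ^^ n) c = c"
  by (induction n) simp_all

lemma iter_cont:
  fixes h :: "'a::metric_space \<Rightarrow> 'a"
  assumes hc: "continuous_on X h" and hX: "h ` X \<subseteq> X"
  shows "\<forall>c\<in>X. \<forall>\<epsilon>>0. \<exists>\<epsilon>'>0. \<forall>x\<in>X. dist x c < \<epsilon>' \<longrightarrow> (\<forall>i\<le>L. dist ((h ^^ i) x) ((h ^^ i) c) < \<epsilon>)"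
proof (induction L)
  case 0
  show ?case
  proof (intro ballI allI impI)
    fix c :: 'a and \<epsilon> :: real assume "c \<in> X" "\<epsilon> > 0"
    then show "\<exists>\<epsilon>'>0. \<forall>x\<in>X. dist x c < \<epsilon>' \<longrightarrow> (\<forall>i\<le>0. dist ((h ^^ i) x) ((h ^^ i) c) < \<epsilon>)"
      by auto
  qed
next
  case (Suc L)
  show ?case
  proof (intro ballI allI impI)
    fix c :: 'a and \<epsilon> :: real assume c: "c \<in> X" and e: "\<epsilon> > 0"
    have hcX: "h c \<in> X" using c hX by blast
    obtain e2 where e2: "e2 > 0" "\<forall>y\<in>X. dist y (h c) < e2 \<longrightarrow> (\<forall>i\<le>L. dist ((h ^^ i) y) ((h ^^ i) (h c)) < \<epsilon>)"
      using Suc.IH hcX e by blast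
    obtain d1 where d1: "d1 > 0" "\<forall>x\<in>X. dist x c < d1 \<longrightarrow> dist (h x) (h c) < e2"
      using hc c e2(1) unfolding continuous_on_iff by blast
    show "\<exists>\<epsilon>'>0. \<forall>x\<in>X. dist x c < \<epsilon>' \<longrightarrow> (\<forall>i\<le>Suc L. dist ((h ^^ i) x) ((h ^^ i) c) < \<epsilon>)"
    proof (intro exI conjI ballI impI allI)
      show "min d1 \<epsilon> > 0" using d1 e by simp
      fix x i assume x: "x \<in> X" and dx: "dist x c < min d1 \<epsilon>" and i: "i \<le> Suc L"
      show "dist ((h ^^ i) x) ((h ^^ i) c) < \<epsilon>"
      proof (cases i)
        case 0 then show ?thesis using dx by simp
      next
        case (Suc j)
        have hx: "h x \<in> X" using x hX by blast
        have "dist (h x) (h c) < e2" using d1(2) x dx by simp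
        then have "dist ((h ^^ j) (h x)) ((h ^^ j) (h c)) < \<epsilon>" using e2(2) hx i Suc by simp
        moreover have "(h ^^ i) x = (h ^^ j) (h x)" "(h ^^ i) c = (h ^^ j) (h c)"
          unfolding Suc by (simp_all only: funpow_Suc_right o_apply)
        ultimately show ?thesis by simp
      qed
    qed
  qed
qed

lemma gap_exists:
  fixes X :: "'a::metric_space set"
  assumes "compact X" "countable X" "\<eta> > 0"
  shows "\<exists>\<rho> \<theta>. 0 < \<rho> \<and> \<rho> < \<eta> \<and> \<theta> > 0 \<and> (\<forall>x\<in>X. \<bar>dist x c - \<rho>\<bar> \<ge> \<theta>)"
proof -
  define Kc where "Kc = (\<lambda>x. dist x c) ` X"
  have "continuous_on X (\<lambda>x. dist x c)" by (intro continuous_intros)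
  then have "compact Kc" unfolding Kc_def using assms(1) by (rule compact_continuous_image)
  then have clK: "closed Kc" by (rule compact_imp_closed)
  have cK: "countable Kc" unfolding Kc_def using assms(2) by simp
  have "uncountable {0<..<\<eta>}" using assms(3) uncountable_open_interval by simp
  then have "\<not> {0<..<\<eta>} \<subseteq> Kc" using cK countable_subset by blast
  then obtain \<rho> where r: "\<rho> \<in> {0<..<\<eta>}" "\<rho> \<notin> Kc" by blast
  have "open (- Kc)" using clK by (simp add: open_Compl)
  then obtain \<theta> where th: "\<theta> > 0" "ball \<rho> \<theta> \<subseteq> - Kc"
    using r(2) open_contains_ball by blast
  have "\<bar>dist x c - \<rho>\<bar> \<ge> \<theta>" if "x \<in> X" for x
  proof (rule ccontr)
    assume "\<not> \<bar>dist x c - \<rho>\<bar> \<ge> \<theta>"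
    then have "dist x c \<in> ball \<rho> \<theta>" by (simp add: dist_real_def abs_minus_commute)
    moreover have "dist x c \<in> Kc" using that Kc_def by blast
    ultimately show False using th(2) by blast
  qed
  then show ?thesis using r(1) th(1) by auto
qed

lemma core:
  fixes X :: "'a::metric_space set" and g :: "'a \<Rightarrow> 'a"
  assumes X: "compact X" "countable X" and gc: "continuous_on X g" and gX: "g ` X \<subseteq> X"
    and c: "c \<in> X" "g c = c" and w: "w \<in> X"
    and H1: "\<forall>\<epsilon>>0. \<forall>N. \<exists>k\<ge>N. dist ((g ^^ k) w) c < \<epsilon>"
    and eta: "\<eta> > 0" and H2: "\<forall>N. \<exists>k\<ge>N. dist ((g ^^ k) w) c \<ge> \<eta>"
  shows "\<exists>\<theta>>0. \<forall>j k. j < k \<longrightarrow>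
     (\<forall>\<epsilon>>0. \<forall>N. \<exists>n\<ge>N. dist ((g ^^ n) ((g ^^ j) w)) ((g ^^ n) ((g ^^ k) w)) < \<epsilon>) \<and>
     (\<forall>N. \<exists>n\<ge>N. dist ((g ^^ n) ((g ^^ j) w)) ((g ^^ n) ((g ^^ k) w)) \<ge> \<theta>)"
proof -
  define a where "a k = (g ^^ k) w" for k
  have aX: "a k \<in> X" for k unfolding a_def using funpow_in[OF gX w] .
  have aadd: "(g ^^ n) ((g ^^ j) w) = a (j + n)" for n j
    unfolding a_def by (simp only: funpow_add_apply)
  obtain \<rho> \<theta> where g: "0 < \<rho>" "\<rho> < \<eta>" "\<theta> > 0" "\<forall>x\<in>X. \<bar>dist x c - \<rho>\<bar> \<ge> \<theta>"
    using gap_exists[OF X eta] by blast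
  have inner: "dist x c \<le> \<rho> - \<theta>" if "x \<in> X" "dist x c < \<rho>" for x
    using g(4) that by force
  have outer: "dist x c \<ge> \<rho> + \<theta>" if "x \<in> X" "dist x c \<ge> \<rho>" for x
    using g(4) that by force
  have stretch: "\<exists>k\<ge>N. \<forall>i\<le>L. dist (a (k + i)) c < \<epsilon>" if e: "\<epsilon> > 0" for L N \<epsilon>
  proof -
    obtain e' where e': "e' > 0" "\<forall>x\<in>X. dist x c < e' \<longrightarrow> (\<forall>i\<le>L. dist ((g ^^ i) x) ((g ^^ i) c) < \<epsilon>)"
      using iter_cont[OF gc gX, of L] c(1) e by blast
    obtain k where k: "k \<ge> N" "dist (a k) c < e'" using H1 e'(1) unfolding a_def by blast
    have "dist (a (k + i)) c < \<epsilon>" if "i \<le> L" for i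
    proof -
      have "dist ((g ^^ i) (a k)) ((g ^^ i) c) < \<epsilon>" using e'(2) aX k(2) that by blast
      moreover have "(g ^^ i) c = c" using funpow_fix[of g c, OF c(2)] .
      moreover have "(g ^^ i) (a k) = a (k + i)" unfolding a_def by (simp only: funpow_add_apply)
      ultimately show ?thesis by simp
    qed
    then show ?thesis using k(1) by blast
  qed
  have far: "\<exists>t\<ge>N + r. dist (a (t - r)) c < \<rho> \<and> dist (a t) c \<ge> \<rho>" if "r > 0" for N r
  proof -
    obtain k0 where k0: "k0 \<ge> N" "\<forall>i\<le>r. dist (a (k0 + i)) c < \<rho>" using stretch g(1) by blast
    obtain t1 where t1: "t1 \<ge> k0" "dist (a t1) c \<ge> \<eta>" using H2 unfolding a_def by blast
    define Q where "Q t \<longleftrightarrow> t \<ge> k0 \<and> dist (a t) c \<ge> \<rho>" for t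
    have "Q t1" using t1 g(2) unfolding Q_def by simp
    define t0 where "t0 = (LEAST t. Q t)"
    have Qt0: "Q t0" unfolding t0_def using \<open>Q t1\<close> by (rule LeastI)
    have "t0 > k0 + r"
    proof (rule ccontr)
      assume "\<not> t0 > k0 + r"
      then have "t0 - k0 \<le> r" "k0 + (t0 - k0) = t0" using Qt0 unfolding Q_def by auto
      then have "dist (a (k0 + (t0 - k0))) c < \<rho>" using k0(2) by blast
      then have "dist (a t0) c < \<rho>" using \<open>k0 + (t0 - k0) = t0\<close> by simp
      then show False using Qt0 unfolding Q_def by simp
    qed
    have "\<not> Q (t0 - r)"
    proof
      assume "Q (t0 - r)"
      then have "t0 \<le> t0 - r" unfolding t0_def by (rule Least_le)
      then show False using \<open>r > 0\<close> \<open>t0 > k0 + r\<close> by simp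
    qed
    then have "dist (a (t0 - r)) c < \<rho>" using \<open>t0 > k0 + r\<close> unfolding Q_def by auto
    moreover have "t0 \<ge> N + r" using \<open>t0 > k0 + r\<close> k0(1) by simp
    ultimately show ?thesis using Qt0 unfolding Q_def by blast
  qed
  have main: "(\<forall>\<epsilon>>0. \<forall>N. \<exists>n\<ge>N. dist ((g ^^ n) ((g ^^ j) w)) ((g ^^ n) ((g ^^ k) w)) < \<epsilon>) \<and>
     (\<forall>N. \<exists>n\<ge>N. dist ((g ^^ n) ((g ^^ j) w)) ((g ^^ n) ((g ^^ k) w)) \<ge> \<theta>)" if jk: "j < k" for j k
  proof (rule conjI)
    show "\<forall>\<epsilon>>0. \<forall>N. \<exists>n\<ge>N. dist ((g ^^ n) ((g ^^ j) w)) ((g ^^ n) ((g ^^ k) w)) < \<epsilon>"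
    proof (intro allI impI)
      fix \<epsilon> :: real and N :: nat assume e: "\<epsilon> > 0"
      obtain k0 where k0: "k0 \<ge> N" "\<forall>i\<le>k. dist (a (k0 + i)) c < \<epsilon> / 2"
        using stretch[of "\<epsilon>/2" N k] e by auto
      have "dist (a (k0 + j)) c < \<epsilon> / 2" "dist (a (k0 + k)) c < \<epsilon> / 2"
        using k0(2) jk by auto
      then have "dist (a (k0 + j)) (a (k0 + k)) < \<epsilon>"
        using dist_triangle_half_l by blast
      moreover have "(g ^^ k0) ((g ^^ j) w) = a (k0 + j)" "(g ^^ k0) ((g ^^ k) w) = a (k0 + k)"
        using aadd by (simp_all add: add.commute)
      ultimately have "dist ((g ^^ k0) ((g ^^ j) w)) ((g ^^ k0) ((g ^^ k) w)) < \<epsilon>" by simp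
      then show "\<exists>n\<ge>N. dist ((g ^^ n) ((g ^^ j) w)) ((g ^^ n) ((g ^^ k) w)) < \<epsilon>"
        using k0(1) by blast
    qed
    show "\<forall>N. \<exists>n\<ge>N. dist ((g ^^ n) ((g ^^ j) w)) ((g ^^ n) ((g ^^ k) w)) \<ge> \<theta>"
    proof
      fix N :: nat
      define r where "r = k - j"
      obtain t where t: "t \<ge> (N + k) + r" "dist (a (t - r)) c < \<rho>" "dist (a t) c \<ge> \<rho>"
        using far[of r "N + k"] jk unfolding r_def by auto
      have i1: "dist (a (t - r)) c \<le> \<rho> - \<theta>" using inner[OF aX t(2)] .
      have o1: "dist (a t) c \<ge> \<rho> + \<theta>" using outer[OF aX t(3)] .
      have "dist (a t) c \<le> dist (a t) (a (t - r)) + dist (a (t - r)) c" by (rule dist_triangle)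
      then have d: "dist (a (t - r)) (a t) \<ge> \<theta>" using i1 o1 g(3) by (simp add: dist_commute)
      define n where "n = t - k"
      have "j + n = t - r" "k + n = t" using t(1) jk unfolding n_def r_def by auto
      then have "(g ^^ n) ((g ^^ j) w) = a (t - r)" "(g ^^ n) ((g ^^ k) w) = a t"
        using aadd[of n j] aadd[of n k] by simp_all
      moreover have "n \<ge> N" using t(1) unfolding n_def by simp
      ultimately have "dist ((g ^^ n) ((g ^^ j) w)) ((g ^^ n) ((g ^^ k) w)) \<ge> \<theta>" using d by simp
      then show "\<exists>n\<ge>N. dist ((g ^^ n) ((g ^^ j) w)) ((g ^^ n) ((g ^^ k) w)) \<ge> \<theta>"
        using \<open>n \<ge> N\<close> by blast
    qed
  qed
  show ?thesis using main g(3) by blast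
qed




lemma pair_from:
  fixes f :: "'a::metric_space \<Rightarrow> 'a"
  assumes A: "\<forall>\<epsilon>>0. \<forall>N. \<exists>n\<ge>N. dist ((f ^^ n) x) ((f ^^ n) y) < \<epsilon>"
      and B: "\<forall>N. \<exists>n\<ge>N. dist ((f ^^ n) x) ((f ^^ n) y) \<ge> \<theta>"
  shows "delta_scrambled_pair f \<theta> x y"
proof -
  define D where "D n = ereal (dist ((f ^^ n) x) ((f ^^ n) y))" for n
  have "0 \<le> liminf D" by (rule Liminf_bounded) (simp add: D_def)
  moreover have "\<not> 0 < liminf D"
  proof
    assume "0 < liminf D"
    then obtain z where z: "0 < ereal z" "ereal z < liminf D" using ereal_dense2 by blast
    have "eventually (\<lambda>n. ereal z < D n) sequentially"
      using le_Liminf_iff[where C="liminf D" and F=sequentially and X=D] z(2) by blast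
    then obtain N where N: "\<forall>n\<ge>N. ereal z < D n" by (auto simp: eventually_sequentially)
    have "z > 0" using z(1) by simp
    then obtain n where n: "n \<ge> N" "dist ((f ^^ n) x) ((f ^^ n) y) < z" using A by blast
    show False using N n by (auto simp: D_def)
  qed
  ultimately have l: "liminf D = 0" by simp
  have "ereal \<theta> \<le> limsup D"
  proof (rule ccontr)
    assume "\<not> ereal \<theta> \<le> limsup D"
    then have "limsup D < ereal \<theta>" by simp
    then have "eventually (\<lambda>n. D n < ereal \<theta>) sequentially"
      using Limsup_le_iff[where C="limsup D" and F=sequentially and X=D] by blast
    then obtain N where N: "\<forall>n\<ge>N. D n < ereal \<theta>" by (auto simp: eventually_sequentially)
    obtain n where n: "n \<ge> N" "dist ((f ^^ n) x) ((f ^^ n) y) \<ge> \<theta>" using B by blast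
    show False using N n by (auto simp: D_def)
  qed
  then show ?thesis using l unfolding delta_scrambled_pair_def D_def by simp
qed

lemma pair_extract:
  fixes f :: "'a::metric_space \<Rightarrow> 'a"
  assumes P: "delta_scrambled_pair f \<delta> u v" and dpos: "\<delta> > 0"
  shows "\<forall>\<epsilon>>0. \<forall>N. \<exists>n\<ge>N. dist ((f ^^ n) u) ((f ^^ n) v) < \<epsilon>"
    and "\<forall>N. \<exists>n\<ge>N. dist ((f ^^ n) u) ((f ^^ n) v) > \<delta> / 2"
proof -
  define D where "D n = ereal (dist ((f ^^ n) u) ((f ^^ n) v))" for n
  have l: "liminf D = 0" and s: "limsup D \<ge> ereal \<delta>"
    using P unfolding delta_scrambled_pair_def D_def by auto
  show "\<forall>\<epsilon>>0. \<forall>N. \<exists>n\<ge>N. dist ((f ^^ n) u) ((f ^^ n) v) < \<epsilon>"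
  proof (intro allI impI)
    fix \<epsilon> :: real and N assume e: "\<epsilon> > 0"
    show "\<exists>n\<ge>N. dist ((f ^^ n) u) ((f ^^ n) v) < \<epsilon>"
    proof (rule ccontr)
      assume "\<not> ?thesis"
      then have "\<forall>n\<ge>N. ereal \<epsilon> \<le> D n" by (auto simp: D_def not_less)
      then have "eventually (\<lambda>n. ereal \<epsilon> \<le> D n) sequentially" by (auto simp: eventually_sequentially)
      then have "ereal \<epsilon> \<le> liminf D" by (rule Liminf_bounded)
      then show False using l e by simp
    qed
  qed
  show "\<forall>N. \<exists>n\<ge>N. dist ((f ^^ n) u) ((f ^^ n) v) > \<delta> / 2"
  proof (intro allI)
    fix N
    show "\<exists>n\<ge>N. dist ((f ^^ n) u) ((f ^^ n) v) > \<delta> / 2"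
    proof (rule ccontr)
      assume "\<not> ?thesis"
      then have "\<forall>n\<ge>N. D n \<le> ereal (\<delta> / 2)" by (auto simp: D_def not_less)
      then have "eventually (\<lambda>n. D n \<le> ereal (\<delta> / 2)) sequentially" by (auto simp: eventually_sequentially)
      then have "limsup D \<le> ereal (\<delta> / 2)" by (rule Limsup_bounded)
      then have "ereal \<delta> \<le> ereal (\<delta> / 2)" using s by (rule order.trans[rotated])
      then have "\<delta> \<le> 0" by simp
      then show False using dpos by simp
    qed
  qed
qed

lemma Z_props:
  fixes X :: "'a::metric_space set" and f :: "'a \<Rightarrow> 'a"
  assumes X: "compact X" and cf: "continuous_on X f" and fX: "f ` X \<subseteq> X"
    and uv: "u \<in> X" "v \<in> X"
    and A: "\<forall>\<epsilon>>0. \<forall>N. \<exists>n\<ge>N. dist ((f ^^ n) u) ((f ^^ n) v) < \<epsilon>"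
  defines "Z \<equiv> {c\<in>X. \<forall>\<epsilon>>0. \<forall>N. \<exists>n\<ge>N. dist ((f ^^ n) u) c < \<epsilon> \<and> dist ((f ^^ n) v) c < \<epsilon>}"
  shows "Z \<noteq> {}" "closed Z" "Z \<subseteq> X" "f ` Z \<subseteq> Z"
proof -
  show ZX: "Z \<subseteq> X" unfolding Z_def by blast
  have "\<forall>i. \<exists>n. n \<ge> i \<and> dist ((f ^^ n) u) ((f ^^ n) v) < inverse (real (Suc i))"
    using A by simp
  then obtain nn where nn: "\<forall>i. nn i \<ge> i \<and> dist ((f ^^ nn i) u) ((f ^^ nn i) v) < inverse (real (Suc i))"
    using choice[of "\<lambda>i n. n \<ge> i \<and> dist ((f ^^ n) u) ((f ^^ n) v) < inverse (real (Suc i))"] by blast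
  have "\<forall>i. (f ^^ nn i) u \<in> X" using funpow_in[OF fX uv(1)] by blast
  then obtain l r where lr: "l \<in> X" "strict_mono r" "((\<lambda>i. (f ^^ nn i) u) \<circ> r) \<longlonglongrightarrow> l"
    using seq_compactE[OF compact_imp_seq_compact[OF X]] by metis
  have "l \<in> Z" unfolding Z_def
  proof (intro CollectI conjI allI impI)
    show "l \<in> X" by (rule lr(1))
    fix \<epsilon> :: real and N :: nat assume e: "\<epsilon> > 0"
    obtain M where M: "\<forall>i\<ge>M. dist ((f ^^ nn (r i)) u) l < \<epsilon> / 2"
    proof -
      have "\<forall>ra>0. \<exists>no. \<forall>n\<ge>no. dist ((f ^^ nn (r n)) u) l < ra"
        using lr(3) unfolding LIMSEQ_def by (simp add: o_def)
      moreover have "\<epsilon> / 2 > 0" using e by simp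
      ultimately have "\<exists>no. \<forall>n\<ge>no. dist ((f ^^ nn (r n)) u) l < \<epsilon> / 2" by blast
      then show ?thesis using that by blast
    qed
    obtain I where I: "inverse (real (Suc I)) < \<epsilon> / 2" using reals_Archimedean[of "\<epsilon>/2"] e by auto
    define i where "i = max M (max N I)"
    have ri: "r i \<ge> i" using seq_suble[OF lr(2)] .
    define n where "n = nn (r i)"
    have nge: "n \<ge> r i" using nn n_def by blast
    have d1: "dist ((f ^^ n) u) l < \<epsilon> / 2" using M i_def n_def by simp
    have "dist ((f ^^ n) u) ((f ^^ n) v) < inverse (real (Suc (r i)))" using nn n_def by blast
    moreover have "inverse (real (Suc (r i))) \<le> inverse (real (Suc I))"
      using ri i_def by (simp add: le_imp_inverse_le)
    ultimately have d2: "dist ((f ^^ n) u) ((f ^^ n) v) < \<epsilon> / 2" using I by linarith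
    have "dist ((f ^^ n) v) l \<le> dist ((f ^^ n) u) ((f ^^ n) v) + dist ((f ^^ n) u) l"
      by (rule dist_triangle3)
    then have "dist ((f ^^ n) v) l < \<epsilon>" using d1 d2 by linarith
    moreover have "dist ((f ^^ n) u) l < \<epsilon>" using d1 e by linarith
    moreover have "n \<ge> N" using nge ri i_def by simp
    ultimately show "\<exists>n\<ge>N. dist ((f ^^ n) u) l < \<epsilon> \<and> dist ((f ^^ n) v) l < \<epsilon>" by blast
  qed
  then show "Z \<noteq> {}" by blast
  have "closure Z \<subseteq> Z"
  proof
    fix x assume x: "x \<in> closure Z"
    have "x \<in> closure X" using closure_mono[OF ZX] x by blast
    then have xX: "x \<in> X" using compact_imp_closed[OF X] by simp
    show "x \<in> Z" unfolding Z_def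
    proof (intro CollectI conjI allI impI)
      show "x \<in> X" by (rule xX)
      fix \<epsilon> :: real and N :: nat assume e: "\<epsilon> > 0"
      have e2: "\<epsilon> / 2 > 0" using e by simp
      have "\<forall>\<epsilon>>0. \<exists>y\<in>Z. dist y x < \<epsilon>" using x closure_approachable by blast
      then obtain y where y: "y \<in> Z" "dist y x < \<epsilon> / 2" using e2 by blast
      have "\<forall>\<epsilon>>0. \<forall>N. \<exists>n\<ge>N. dist ((f ^^ n) u) y < \<epsilon> \<and> dist ((f ^^ n) v) y < \<epsilon>"
        using y(1) unfolding Z_def by blast
      then obtain n where n: "n \<ge> N" "dist ((f ^^ n) u) y < \<epsilon> / 2" "dist ((f ^^ n) v) y < \<epsilon> / 2"
        using e2 by blast
      have "dist ((f ^^ n) u) x < \<epsilon>" using dist_triangle_half_l[OF n(2)] y(2) by (simp add: dist_commute)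
      moreover have "dist ((f ^^ n) v) x < \<epsilon>" using dist_triangle_half_l[OF n(3)] y(2) by (simp add: dist_commute)
      ultimately show "\<exists>n\<ge>N. dist ((f ^^ n) u) x < \<epsilon> \<and> dist ((f ^^ n) v) x < \<epsilon>" using n(1) by blast
    qed
  qed
  then show "closed Z" using closure_subset_eq by blast
  show "f ` Z \<subseteq> Z"
  proof (rule image_subsetI)
    fix c assume c: "c \<in> Z"
    then have cX: "c \<in> X" unfolding Z_def by blast
    show "f c \<in> Z" unfolding Z_def
    proof (intro CollectI conjI allI impI)
      show "f c \<in> X" using cX fX by blast
      fix \<epsilon> :: real and N :: nat assume e: "\<epsilon> > 0"
      obtain d where d: "d > 0" "\<forall>x\<in>X. dist x c < d \<longrightarrow> dist (f x) (f c) < \<epsilon>"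
        using cf cX e unfolding continuous_on_iff by blast
      obtain n where n: "n \<ge> N" "dist ((f ^^ n) u) c < d" "dist ((f ^^ n) v) c < d"
        using c d(1) unfolding Z_def by blast
      have "dist (f ((f ^^ n) u)) (f c) < \<epsilon>" using d(2) n(2) funpow_in[OF fX uv(1)] by blast
      moreover have "dist (f ((f ^^ n) v)) (f c) < \<epsilon>" using d(2) n(3) funpow_in[OF fX uv(2)] by blast
      ultimately have "dist ((f ^^ Suc n) u) (f c) < \<epsilon> \<and> dist ((f ^^ Suc n) v) (f c) < \<epsilon>" by simp
      moreover have "Suc n \<ge> N" using n(1) by simp
      ultimately show "\<exists>n\<ge>N. dist ((f ^^ n) u) (f c) < \<epsilon> \<and> dist ((f ^^ n) v) (f c) < \<epsilon>" by blast
    qed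
  qed
qed


lemma funpow_cont:
  assumes "continuous_on X h" "h ` X \<subseteq> X"
  shows "continuous_on X (h ^^ n)"
proof (induction n)
  case 0 then show ?case by (simp add: continuous_on_id)
next
  case (Suc n)
  have "continuous_on X (\<lambda>x. h ((h ^^ n) x))"
    using continuous_on_compose2[OF assms(1) Suc.IH] funpow_in[OF assms(2)] by blast
  then show ?case by (simp add: o_def)
qed

lemma pair_sym: "delta_scrambled_pair f \<theta> x y \<Longrightarrow> delta_scrambled_pair f \<theta> y x"
  by (simp add: delta_scrambled_pair_def dist_commute)

lemma g2f:
  fixes f :: "'a::metric_space \<Rightarrow> 'a"
  assumes m: "m > 0"
    and A: "\<forall>\<epsilon>>0. \<forall>N. \<exists>n\<ge>N. dist (((f ^^ m) ^^ n) x) (((f ^^ m) ^^ n) y) < \<epsilon>"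
    and B: "\<forall>N. \<exists>n\<ge>N. dist (((f ^^ m) ^^ n) x) (((f ^^ m) ^^ n) y) \<ge> \<theta>"
  shows "delta_scrambled_pair f \<theta> x y"
proof (rule pair_from)
  have nm: "n \<le> m * n" for n using m by (cases m) simp_all
  show "\<forall>\<epsilon>>0. \<forall>N. \<exists>n\<ge>N. dist ((f ^^ n) x) ((f ^^ n) y) < \<epsilon>"
  proof (intro allI impI)
    fix \<epsilon> :: real and N :: nat assume "\<epsilon> > 0"
    then obtain n where n: "n \<ge> N" "dist (((f ^^ m) ^^ n) x) (((f ^^ m) ^^ n) y) < \<epsilon>" using A by blast
    then have "dist ((f ^^ (m * n)) x) ((f ^^ (m * n)) y) < \<epsilon>" by (simp only: funpow_mult)
    moreover have "m * n \<ge> N" using n(1) nm[of n] by linarith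
    ultimately show "\<exists>n\<ge>N. dist ((f ^^ n) x) ((f ^^ n) y) < \<epsilon>" by blast
  qed
  show "\<forall>N. \<exists>n\<ge>N. dist ((f ^^ n) x) ((f ^^ n) y) \<ge> \<theta>"
  proof
    fix N :: nat
    obtain n where n: "n \<ge> N" "dist (((f ^^ m) ^^ n) x) (((f ^^ m) ^^ n) y) \<ge> \<theta>" using B by blast
    then have "dist ((f ^^ (m * n)) x) ((f ^^ (m * n)) y) \<ge> \<theta>" by (simp only: funpow_mult)
    moreover have "m * n \<ge> N" using n(1) nm[of n] by linarith
    ultimately show "\<exists>n\<ge>N. dist ((f ^^ n) x) ((f ^^ n) y) \<ge> \<theta>" by blast
  qed
qed

theorem corollary1p6:
  fixes X :: "'a::metric_space set" and f :: "'a \<Rightarrow> 'a"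
  assumes "compact X" and "countable X"
    and "continuous_on X f" and "f ` X \<subseteq> X"
    and "\<exists>u\<in>X. \<exists>v\<in>X. scrambled_pair f u v"
  shows "\<exists>\<delta>>0. \<exists>S\<subseteq>X. infinite S \<and> delta_scrambled_set f \<delta> S"
proof -
  note cf = assms(3) and fX = assms(4)
  obtain u v where uv: "u \<in> X" "v \<in> X" "scrambled_pair f u v" using assms(5) by blast
  obtain \<delta> where d: "\<delta> > 0" "delta_scrambled_pair f \<delta> u v"
    using uv(3) unfolding scrambled_pair_def by blast
  note A = pair_extract(1)[OF d(2) d(1)] and B = pair_extract(2)[OF d(2) d(1)]
  define Z where "Z = {c\<in>X. \<forall>\<epsilon>>0. \<forall>N. \<exists>n\<ge>N. dist ((f ^^ n) u) c < \<epsilon> \<and> dist ((f ^^ n) v) c < \<epsilon>}"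
  have Zne: "Z \<noteq> {}" unfolding Z_def by (rule Z_props(1)[OF assms(1) cf fX uv(1,2) A])
  have Zcl: "closed Z" unfolding Z_def by (rule Z_props(2)[OF assms(1) cf fX uv(1,2) A])
  have ZX: "Z \<subseteq> X" unfolding Z_def by (rule Z_props(3)[OF assms(1) cf fX uv(1,2) A])
  have fZ: "f ` Z \<subseteq> Z" unfolding Z_def by (rule Z_props(4)[OF assms(1) cf fX uv(1,2) A])
  have "compact (X \<inter> Z)" using compact_Int_closed[OF assms(1) Zcl] .
  moreover have "X \<inter> Z = Z" using ZX by blast
  ultimately have Zc: "compact Z" by simp
  have Zct: "countable Z" using countable_subset[OF ZX assms(2)] .
  have cfZ: "continuous_on Z f" using continuous_on_subset[OF cf ZX] .
  obtain c m where cm: "c \<in> Z" "m > 0" "(f ^^ m) c = c"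
    using periodic_exists[OF Zc Zct Zne cfZ fZ] by blast
  have cX: "c \<in> X" using cm(1) ZX by blast
  have cZ: "\<forall>\<epsilon>>0. \<forall>N. \<exists>n\<ge>N. dist ((f ^^ n) u) c < \<epsilon> \<and> dist ((f ^^ n) v) c < \<epsilon>"
    using cm(1) unfolding Z_def by blast
  define Q where "Q k r e \<longleftrightarrow> dist ((f ^^ (m * k + r)) u) c < e \<and> dist ((f ^^ (m * k + r)) v) c < e" for k r e
  have "\<exists>r<m. \<forall>\<epsilon>>0. \<forall>N. \<exists>k\<ge>N. Q k r \<epsilon>"
  proof (rule ccontr)
    assume neg: "\<not> ?thesis"
    have "\<forall>r. \<exists>e. r < m \<longrightarrow> e > 0 \<and> (\<exists>N. \<forall>k\<ge>N. \<not> Q k r e)"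
      using neg by blast
    then obtain e where e: "\<forall>r. r < m \<longrightarrow> e r > 0 \<and> (\<exists>N. \<forall>k\<ge>N. \<not> Q k r (e r))"
      using choice[of "\<lambda>r e. r < m \<longrightarrow> e > 0 \<and> (\<exists>N. \<forall>k\<ge>N. \<not> Q k r e)"] by blast
    have "\<forall>r. \<exists>N. r < m \<longrightarrow> (\<forall>k\<ge>N. \<not> Q k r (e r))" using e by blast
    then obtain M where M: "\<forall>r. r < m \<longrightarrow> (\<forall>k\<ge>M r. \<not> Q k r (e r))"
      using choice[of "\<lambda>r N. r < m \<longrightarrow> (\<forall>k\<ge>N. \<not> Q k r (e r))"] by blast
    define e0 where "e0 = Min (e ` {..<m})"
    define N0 where "N0 = Max (M ` {..<m})"
    have ne: "e ` {..<m} \<noteq> {}" using cm(2) by blast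
    have e0: "e0 > 0" unfolding e0_def using ne e by (simp add: Min_gr_iff)
    obtain n where n: "n \<ge> m * N0" "dist ((f ^^ n) u) c < e0" "dist ((f ^^ n) v) c < e0"
      using cZ e0 by blast
    define r where "r = n mod m"
    define k where "k = n div m"
    have rm: "r < m" unfolding r_def using cm(2) by simp
    have nkr: "m * k + r = n" unfolding k_def r_def by (rule mult_div_mod_eq)
    have "(m * N0) div m \<le> n div m" using n(1) by (rule div_le_mono)
    then have kN0: "k \<ge> N0" unfolding k_def using cm(2) by simp
    have "M r \<le> N0" unfolding N0_def using rm by (simp add: Max_ge)
    then have kM: "k \<ge> M r" using kN0 by simp
    have "e0 \<le> e r" unfolding e0_def using rm by (simp add: Min_le)
    then have "Q k r (e r)" unfolding Q_def nkr using n(2,3) by simp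
    then show False using M rm kM by blast
  qed
  then obtain r where r: "r < m" "\<forall>\<epsilon>>0. \<forall>N. \<exists>k\<ge>N. Q k r \<epsilon>" by blast
  define g where "g = f ^^ m"
  define u' where "u' = (f ^^ r) u"
  define v' where "v' = (f ^^ r) v"
  have gk: "(g ^^ k) ((f ^^ r) x) = (f ^^ (m * k + r)) x" for k x
    unfolding g_def by (simp only: funpow_mult funpow_add o_apply)
  have H1: "\<forall>\<epsilon>>0. \<forall>N. \<exists>k\<ge>N. dist ((g ^^ k) u') c < \<epsilon> \<and> dist ((g ^^ k) v') c < \<epsilon>"
    using r(2) unfolding Q_def u'_def v'_def gk by blast
  have gX: "g ` X \<subseteq> X" unfolding g_def using funpow_in[OF fX] by blast
  have gc: "continuous_on X g" unfolding g_def by (rule funpow_cont[OF cf fX])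
  have gfix: "g c = c" unfolding g_def by (rule cm(3))
  have u'X: "u' \<in> X" unfolding u'_def using funpow_in[OF fX uv(1)] .
  have v'X: "v' \<in> X" unfolding v'_def using funpow_in[OF fX uv(2)] .
  have "\<exists>w\<in>{u', v'}. \<exists>\<eta>>0. \<forall>N. \<exists>k\<ge>N. dist ((g ^^ k) w) c \<ge> \<eta>"
  proof (rule ccontr)
    assume neg: "\<not> ?thesis"
    have cu: "\<forall>\<eta>>0. \<exists>N. \<forall>k\<ge>N. \<not> dist ((g ^^ k) u') c \<ge> \<eta>" using neg by blast
    have cv: "\<forall>\<eta>>0. \<exists>N. \<forall>k\<ge>N. \<not> dist ((g ^^ k) v') c \<ge> \<eta>" using neg by blast
    have d4: "\<delta> / 4 > 0" using d(1) by simp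
    obtain e' where e': "e' > 0" "\<forall>x\<in>X. dist x c < e' \<longrightarrow> (\<forall>i\<le>m. dist ((f ^^ i) x) ((f ^^ i) c) < \<delta> / 4)"
      using iter_cont[OF cf fX, of m] cX d4 by blast
    obtain N1 where N1: "\<forall>k\<ge>N1. \<not> dist ((g ^^ k) u') c \<ge> e'" using cu e'(1) by blast
    obtain N2 where N2: "\<forall>k\<ge>N2. \<not> dist ((g ^^ k) v') c \<ge> e'" using cv e'(1) by blast
    obtain n where n: "n \<ge> r + m * (N1 + N2)" "dist ((f ^^ n) u) ((f ^^ n) v) > \<delta> / 2"
      using B by blast
    define k where "k = (n - r) div m"
    define s where "s = (n - r) mod m"
    have sm: "s < m" unfolding s_def using cm(2) by simp
    have "m * k + s = n - r" unfolding k_def s_def by (rule mult_div_mod_eq)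
    then have nsk: "n = s + (m * k + r)" using n(1) by linarith
    have "(m * (N1 + N2)) div m \<le> (n - r) div m" using n(1) by (intro div_le_mono) linarith
    then have kN: "k \<ge> N1 + N2" unfolding k_def using cm(2) by simp
    have fn: "(f ^^ n) x = (f ^^ s) ((g ^^ k) ((f ^^ r) x))" for x
      unfolding gk nsk by (simp only: funpow_add o_apply)
    have gu: "(g ^^ k) u' \<in> X" using funpow_in[OF gX u'X] .
    have gv: "(g ^^ k) v' \<in> X" using funpow_in[OF gX v'X] .
    have "dist ((g ^^ k) u') c < e'" using N1 kN by (simp add: not_le)
    then have du: "dist ((f ^^ s) ((g ^^ k) u')) ((f ^^ s) c) < \<delta> / 4" using e'(2) gu sm by simp
    have "dist ((g ^^ k) v') c < e'" using N2 kN by (simp add: not_le)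
    then have dv: "dist ((f ^^ s) ((g ^^ k) v')) ((f ^^ s) c) < \<delta> / 4" using e'(2) gv sm by simp
    have "dist ((f ^^ n) u) ((f ^^ n) v) = dist ((f ^^ s) ((g ^^ k) u')) ((f ^^ s) ((g ^^ k) v'))"
      unfolding fn u'_def v'_def ..
    also have "\<dots> \<le> dist ((f ^^ s) ((g ^^ k) u')) ((f ^^ s) c) + dist ((f ^^ s) ((g ^^ k) v')) ((f ^^ s) c)"
      by (rule dist_triangle2)
    finally show False using du dv n(2) by linarith
  qed
  then obtain w \<eta> where w: "w \<in> {u', v'}" "\<eta> > 0" "\<forall>N. \<exists>k\<ge>N. dist ((g ^^ k) w) c \<ge> \<eta>" by blast
  have wX: "w \<in> X" using w(1) u'X v'X by blast
  have H1u: "\<forall>\<epsilon>>0. \<forall>N. \<exists>k\<ge>N. dist ((g ^^ k) u') c < \<epsilon>" using H1 by blast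
  have H1v: "\<forall>\<epsilon>>0. \<forall>N. \<exists>k\<ge>N. dist ((g ^^ k) v') c < \<epsilon>" using H1 by blast
  have "w = u' \<or> w = v'" using w(1) by simp
  then have H1w: "\<forall>\<epsilon>>0. \<forall>N. \<exists>k\<ge>N. dist ((g ^^ k) w) c < \<epsilon>"
  proof
    assume "w = u'" then show ?thesis using H1u by simp
  next
    assume "w = v'" then show ?thesis using H1v by simp
  qed
  obtain \<theta> where th: "\<theta> > 0" "\<forall>j k. j < k \<longrightarrow>
     (\<forall>\<epsilon>>0. \<forall>N. \<exists>n\<ge>N. dist ((g ^^ n) ((g ^^ j) w)) ((g ^^ n) ((g ^^ k) w)) < \<epsilon>) \<and>
     (\<forall>N. \<exists>n\<ge>N. dist ((g ^^ n) ((g ^^ j) w)) ((g ^^ n) ((g ^^ k) w)) \<ge> \<theta>)"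
    using core[OF assms(1,2) gc gX cX gfix wX H1w w(2) w(3)] by blast
  have fpair: "delta_scrambled_pair f \<theta> ((g ^^ j) w) ((g ^^ k) w)" if "j < k" for j k
  proof -
    have P: "(\<forall>\<epsilon>>0. \<forall>N. \<exists>n\<ge>N. dist ((g ^^ n) ((g ^^ j) w)) ((g ^^ n) ((g ^^ k) w)) < \<epsilon>) \<and>
     (\<forall>N. \<exists>n\<ge>N. dist ((g ^^ n) ((g ^^ j) w)) ((g ^^ n) ((g ^^ k) w)) \<ge> \<theta>)"
      using th(2) that by blast
    show ?thesis unfolding g_def
      by (rule g2f[OF cm(2) conjunct1[OF P[unfolded g_def]] conjunct2[OF P[unfolded g_def]]])
  qed
  have neq: "(g ^^ j) w \<noteq> (g ^^ k) w" if "j < k" for j k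
  proof
    assume eq: "(g ^^ j) w = (g ^^ k) w"
    have "\<forall>N. \<exists>n\<ge>N. dist ((g ^^ n) ((g ^^ j) w)) ((g ^^ n) ((g ^^ k) w)) \<ge> \<theta>"
      using th(2) that by blast
    then obtain n where n: "dist ((g ^^ n) ((g ^^ j) w)) ((g ^^ n) ((g ^^ k) w)) \<ge> \<theta>" by blast
    have "(g ^^ n) ((g ^^ j) w) = (g ^^ n) ((g ^^ k) w)" using eq by (rule arg_cong)
    then have "dist ((g ^^ n) ((g ^^ j) w)) ((g ^^ n) ((g ^^ k) w)) = 0" by simp
    then show False using n th(1) by linarith
  qed
  define S where "S = range (\<lambda>k. (g ^^ k) w)"
  have "inj (\<lambda>k. (g ^^ k) w)"
  proof (rule injI)
    fix j k assume eq: "(g ^^ j) w = (g ^^ k) w"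
    show "j = k"
    proof (rule ccontr)
      assume "j \<noteq> k"
      then have "j < k \<or> k < j" by arith
      then show False using neq[of j k] neq[of k j] eq by auto
    qed
  qed
  then have infS: "infinite S" unfolding S_def by (rule range_inj_infinite)
  have SX: "S \<subseteq> X" unfolding S_def using funpow_in[OF gX wX] by blast
  have "delta_scrambled_set f \<theta> S"
    unfolding delta_scrambled_set_def
  proof (intro ballI impI)
    fix x y assume x: "x \<in> S" and y: "y \<in> S" and xy: "x \<noteq> y"
    obtain j where j: "x = (g ^^ j) w" using x S_def by blast
    obtain k where k: "y = (g ^^ k) w" using y S_def by blast
    have "j \<noteq> k" using xy j k by blast
    then have "j < k \<or> k < j" by arith
    then show "delta_scrambled_pair f \<theta> x y"
    proof
      assume "j < k" then show ?thesis using fpair j k by blast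
    next
      assume "k < j" then show ?thesis using fpair[of k j] pair_sym j k by blast
    qed
  qed
  then show ?thesis using th(1) SX infS by blast
qed

end
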